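(* Let $D\ge1$, let $Q_D$ be the $D$-dimensional hypercube on $X=\{0,1\}^D$ with adjacency matrix $A$, and let $E_1V$ be the eigenspace of $A$ in $V=\mathbb{R}^X$ for the eigenvalue $D-2$. Every antisymmetric $A$-like matrix $B$ leaves $E_1V$ invariant, and the restriction map $B\mapsto B|_{E_1V}$ is a bijection from the space of antisymmetric $A$-like matrices onto the space of linear maps $T:E_1V\to E_1V$ satisfying $\langle Tu,w\rangle=-\langle u,Tw\rangle$ for all $u,w\in E_1V$.
   Context: $Q_D$ is the graph with vertex set $X=\{0,1\}^D$, two vertices adjacent iff they differ in exactly one coordinate. Matrices are real with rows and columns indexed by $X$ and act on $V=\mathbb{R}^X$, equipped with the standard inner product $\langle u,w\rangle=u^tw$. A matrix $B$ is $A$-like if $BA=AB$ and $B_{xy}=0$ for all $x,y\in X$ that are neither equal nor adjacent; it is antisymmetric if $B^t=-B$. *)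

theory Defs
  imports Complex_Main "HOL-Library.FuncSet"
begin

text \<open>Matrices are real functions on
pairs of vertices, vectors real functions on vertices; both are required to vanish
outside the vertex set so that they are uniquely determined by their entries on X.\<close>

type_synonym vtx = "bool list"
type_synonym mat = "vtx \<Rightarrow> vtx \<Rightarrow> real"
type_synonym vec = "vtx \<Rightarrow> real"

definition hcube :: "nat \<Rightarrow> vtx set" where
  "hcube D = {x. length x = D}"

definition hadj :: "nat \<Rightarrow> vtx \<Rightarrow> vtx \<Rightarrow> bool" where
  "hadj D x y \<longleftrightarrow> x \<in> hcube D \<and> y \<in> hcube D \<and> card {i. i < D \<and> x ! i \<noteq> y ! i} = 1"

definition adjmat :: "nat \<Rightarrow> mat" where
  "adjmat D x y = (if hadj D x y then 1 else 0)"

definition is_mat :: "nat \<Rightarrow> mat \<Rightarrow> bool" where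
  "is_mat D B \<longleftrightarrow> (\<forall>x y. (x \<notin> hcube D \<or> y \<notin> hcube D) \<longrightarrow> B x y = 0)"

definition is_vec :: "nat \<Rightarrow> vec \<Rightarrow> bool" where
  "is_vec D v \<longleftrightarrow> (\<forall>x. x \<notin> hcube D \<longrightarrow> v x = 0)"

definition matmul :: "nat \<Rightarrow> mat \<Rightarrow> mat \<Rightarrow> mat" where
  "matmul D B C x y = (if x \<in> hcube D \<and> y \<in> hcube D then (\<Sum>z\<in>hcube D. B x z * C z y) else 0)"

definition mulvec :: "nat \<Rightarrow> mat \<Rightarrow> vec \<Rightarrow> vec" where
  "mulvec D B v x = (if x \<in> hcube D then (\<Sum>y\<in>hcube D. B x y * v y) else 0)"

definition inprod :: "nat \<Rightarrow> vec \<Rightarrow> vec \<Rightarrow> real" where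
  "inprod D u w = (\<Sum>x\<in>hcube D. u x * w x)"

definition A_like :: "nat \<Rightarrow> mat \<Rightarrow> bool" where
  "A_like D B \<longleftrightarrow> matmul D B (adjmat D) = matmul D (adjmat D) B \<and>
     (\<forall>x\<in>hcube D. \<forall>y\<in>hcube D. x \<noteq> y \<and> \<not> hadj D x y \<longrightarrow> B x y = 0)"

definition antisym_mat :: "nat \<Rightarrow> mat \<Rightarrow> bool" where
  "antisym_mat D B \<longleftrightarrow> (\<forall>x\<in>hcube D. \<forall>y\<in>hcube D. B y x = - B x y)"

definition antisym_A_like :: "nat \<Rightarrow> mat set" where
  "antisym_A_like D = {B. is_mat D B \<and> A_like D B \<and> antisym_mat D B}"

definition E1 :: "nat \<Rightarrow> vec set" where
  "E1 D = {v. is_vec D v \<and> mulvec D (adjmat D) v = (\<lambda>x. (real D - 2) * v x)}"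

definition skew_maps_E1 :: "nat \<Rightarrow> (vec \<Rightarrow> vec) set" where
  "skew_maps_E1 D = {T. T \<in> extensional (E1 D) \<and> T \<in> E1 D \<rightarrow> E1 D \<and>
     (\<forall>u\<in>E1 D. \<forall>w\<in>E1 D. T (\<lambda>x. u x + w x) = (\<lambda>x. T u x + T w x)) \<and>
     (\<forall>c. \<forall>u\<in>E1 D. T (\<lambda>x. c * u x) = (\<lambda>x. c * T u x)) \<and>
     (\<forall>u\<in>E1 D. \<forall>w\<in>E1 D. inprod D (T u) w = - inprod D u (T w))}"

end

theory Submission
  imports Defs
begin

definition flip :: "nat \<Rightarrow> vtx \<Rightarrow> vtx" where
  "flip i x = x[i := \<not> x ! i]"

definition sg :: "bool \<Rightarrow> real" where "sg b = (if b then -1 else 1)"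

definition chi :: "nat \<Rightarrow> nat set \<Rightarrow> vec" where
  "chi D S x = (if length x = D then (\<Prod>i\<in>S. sg (x ! i)) else 0)"

lemma finite_hcube[simp]: "finite (hcube D)"
proof -
  have "hcube D = {xs. set xs \<subseteq> (UNIV::bool set) \<and> length xs = D}" by (auto simp: hcube_def)
  then show ?thesis using finite_lists_length_eq[of "UNIV::bool set" D] by simp
qed

lemma length_flip[simp]: "length (flip i x) = length x" by (simp add: flip_def)

lemma flip_in[simp]: "flip i x \<in> hcube D \<longleftrightarrow> x \<in> hcube D" by (simp add: hcube_def)

lemma nth_flip: "i < length x \<Longrightarrow> flip i x ! j = (if j = i then \<not> x ! i else x ! j)"
  by (auto simp: flip_def)

lemma flip_flip[simp]: "flip i (flip i x) = x"
  by (cases "i < length x") (auto simp: flip_def list_update_beyond)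

lemma flip_comm: "flip i (flip k x) = flip k (flip i x)"
  unfolding flip_def
  by (cases "i < length x"; cases "k < length x"; cases "i = k") (auto simp: list_update_swap nth_list_update)

lemma flip_inj: "i < length x \<Longrightarrow> k < length x \<Longrightarrow> flip i x = flip k x \<longleftrightarrow> i = k"
proof
  assume "i < length x" "k < length x" "flip i x = flip k x"
  then have "flip i x ! i = flip k x ! i" by simp
  then show "i = k" using \<open>i < length x\<close> \<open>k < length x\<close> by (auto simp: nth_flip split: if_splits)
qed simp

lemma hadj_sym: "hadj D x y = hadj D y x"
proof -
  have "{i. i < D \<and> x ! i \<noteq> y ! i} = {i. i < D \<and> y ! i \<noteq> x ! i}" by auto
  then show ?thesis unfolding hadj_def by auto
qed

lemma adjmat_sym: "adjmat D x y = adjmat D y x"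
  by (simp add: adjmat_def hadj_sym)

lemma hadj_iff: assumes "x \<in> hcube D" shows "hadj D x y \<longleftrightarrow> (\<exists>i<D. y = flip i x)"
proof
  assume h: "hadj D x y"
  then have y: "y \<in> hcube D" and c: "card {i. i < D \<and> x ! i \<noteq> y ! i} = 1" by (auto simp: hadj_def)
  then obtain j where j: "{i. i < D \<and> x ! i \<noteq> y ! i} = {j}" by (meson card_1_singletonE)
  then have jD: "j < D" by auto
  have "y = flip j x"
  proof (rule nth_equalityI)
    show "length y = length (flip j x)" using y assms by (simp add: hcube_def)
    fix i assume "i < length y"
    then have iD: "i < D" using y by (simp add: hcube_def)
    have jl: "j < length x" using jD assms by (simp add: hcube_def)
    show "y ! i = flip j x ! i"
    proof (cases "i = j")
      case True
      then have "x ! i \<noteq> y ! i" using j by auto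
      then show ?thesis using True jl by (auto simp: nth_flip)
    next
      case False
      then have "x ! i = y ! i" using j iD by auto
      then show ?thesis using False jl by (auto simp: nth_flip)
    qed
  qed
  then show "\<exists>i<D. y = flip i x" using jD by blast
next
  assume "\<exists>i<D. y = flip i x"
  then obtain i where i: "i < D" "y = flip i x" by blast
  have il: "i < length x" using i assms by (simp add: hcube_def)
  have "{k. k < D \<and> x ! k \<noteq> y ! k} = {i}" using i il by (auto simp: nth_flip)
  then show "hadj D x y" using assms i by (simp add: hadj_def)
qed

lemma sum_support:
  assumes x: "x \<in> hcube D" and z: "\<And>y. y \<in> hcube D \<Longrightarrow> \<not> hadj D x y \<Longrightarrow> g y = 0"
  shows "(\<Sum>y\<in>hcube D. g y) = (\<Sum>i<D. g (flip i x))"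
proof -
  have sub: "(\<lambda>i. flip i x) ` {..<D} \<subseteq> hcube D" using x by auto
  have "(\<Sum>y\<in>hcube D. g y) = (\<Sum>y\<in>(\<lambda>i. flip i x) ` {..<D}. g y)"
    by (rule sum.mono_neutral_right) (use sub z hadj_iff[OF x] in auto)
  also have "\<dots> = (\<Sum>i<D. g (flip i x))"
    by (rule sum.reindex_cong[where l="\<lambda>i. flip i x"]) (use x in \<open>auto simp: inj_on_def flip_inj hcube_def\<close>)
  finally show ?thesis .
qed

lemma mulvec_adj: "x \<in> hcube D \<Longrightarrow> mulvec D (adjmat D) v x = (\<Sum>i<D. v (flip i x))"
  unfolding mulvec_def
  by (subst sum_support[where x=x]) (auto simp: adjmat_def hadj_iff intro!: sum.cong)


lemma sg_sq[simp]: "sg b * sg b = 1" by (simp add: sg_def)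

lemma sg_not[simp]: "sg (\<not> b) = - sg b" by (simp add: sg_def)

lemma chi_out: "x \<notin> hcube D \<Longrightarrow> chi D S x = 0" by (simp add: chi_def hcube_def)

lemma chi_single: "chi D {m} x = (if length x = D then sg (x ! m) else 0)"
  by (simp add: chi_def)

lemma chi_flip:
  assumes x: "x \<in> hcube D" and i: "i < D" and S: "finite S"
  shows "chi D S (flip i x) = (if i \<in> S then - chi D S x else chi D S x)"
proof -
  have il: "i < length x" and lx: "length x = D" using x i by (auto simp: hcube_def)
  show ?thesis
  proof (cases "i \<in> S")
    case True
    have "(\<Prod>j\<in>S. sg (flip i x ! j)) = sg (flip i x ! i) * (\<Prod>j\<in>S-{i}. sg (flip i x ! j))"
      using True S by (simp add: prod.remove)
    also have "(\<Prod>j\<in>S-{i}. sg (flip i x ! j)) = (\<Prod>j\<in>S-{i}. sg (x ! j))"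
      by (rule prod.cong) (auto simp: nth_flip il)
    also have "sg (flip i x ! i) = - sg (x ! i)" by (simp add: nth_flip il)
    also have "- sg (x ! i) * (\<Prod>j\<in>S-{i}. sg (x ! j)) = - (\<Prod>j\<in>S. sg (x ! j))"
      using True S by (simp add: prod.remove)
    finally show ?thesis using True lx by (simp add: chi_def)
  next
    case False
    have "(\<Prod>j\<in>S. sg (flip i x ! j)) = (\<Prod>j\<in>S. sg (x ! j))"
      by (rule prod.cong) (use False in \<open>auto simp: nth_flip il\<close>)
    then show ?thesis using False lx by (simp add: chi_def)
  qed
qed

lemma kernel:
  assumes x: "x \<in> hcube D" and y: "y \<in> hcube D"
  shows "(\<Sum>S\<in>Pow {..<D}. chi D S x * chi D S y) = (if x = y then 2 ^ D else 0)"
proof -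
  have lx: "length x = D" and ly: "length y = D" using x y by (auto simp: hcube_def)
  have "(\<Sum>S\<in>Pow {..<D}. chi D S x * chi D S y)
      = (\<Sum>S\<in>Pow {..<D}. (\<Prod>i\<in>S. sg (x ! i) * sg (y ! i)) * (\<Prod>i\<in>{..<D}-S. 1))"
    by (rule sum.cong) (auto simp: chi_def lx ly prod.distrib)
  also have "\<dots> = (\<Prod>i<D. sg (x ! i) * sg (y ! i) + 1)"
    by (rule prod_add[symmetric]) simp
  also have "\<dots> = (if x = y then 2 ^ D else 0)"
  proof (cases "x = y")
    case True
    then show ?thesis by simp
  next
    case False
    have "\<exists>i<D. x ! i \<noteq> y ! i"
    proof (rule ccontr)
      assume "\<not> (\<exists>i<D. x ! i \<noteq> y ! i)"
      then have "x = y" using lx ly by (auto intro: nth_equalityI)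
      then show False using False by simp
    qed
    then obtain i where i: "i < D" "x ! i \<noteq> y ! i" by blast
    then have z: "sg (x ! i) * sg (y ! i) + 1 = 0" by (auto simp: sg_def)
    have ex: "\<exists>a\<in>{..<D}. sg (x ! a) * sg (y ! a) + 1 = 0" using i(1) z by blast
    have "(\<Prod>i<D. sg (x ! i) * sg (y ! i) + 1) = 0"
      by (rule prod_zero[OF finite_lessThan ex])
    then show ?thesis using False by simp
  qed
  finally show ?thesis .
qed

lemma inversion:
  assumes x: "x \<in> hcube D"
  shows "v x = (\<Sum>S\<in>Pow {..<D}. inprod D v (chi D S) * chi D S x) / 2 ^ D"
proof -
  have "(\<Sum>S\<in>Pow {..<D}. inprod D v (chi D S) * chi D S x)
      = (\<Sum>S\<in>Pow {..<D}. \<Sum>y\<in>hcube D. v y * (chi D S y * chi D S x))"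
    by (simp add: inprod_def sum_distrib_right mult.assoc)
  also have "\<dots> = (\<Sum>y\<in>hcube D. v y * (\<Sum>S\<in>Pow {..<D}. chi D S y * chi D S x))"
    by (subst sum.swap) (simp add: sum_distrib_left)
  also have "\<dots> = (\<Sum>y\<in>hcube D. if y = x then v y * 2 ^ D else 0)"
    by (rule sum.cong) (auto simp: kernel x)
  also have "\<dots> = v x * 2 ^ D" using x by simp
  finally show ?thesis by simp
qed

lemma adj_chi:
  assumes S: "S \<subseteq> {..<D}"
  shows "mulvec D (adjmat D) (chi D S) = (\<lambda>x. (real D - 2 * real (card S)) * chi D S x)"
proof
  fix x
  show "mulvec D (adjmat D) (chi D S) x = (real D - 2 * real (card S)) * chi D S x"
  proof (cases "x \<in> hcube D")
    case False
    then show ?thesis by (simp add: mulvec_def chi_out)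
  next
    case True
    have fS: "finite S" using S finite_subset by blast
    have "mulvec D (adjmat D) (chi D S) x = (\<Sum>i<D. chi D S (flip i x))"
      by (rule mulvec_adj[OF True])
    also have "\<dots> = (\<Sum>i<D. chi D S x - (if i \<in> S then 2 * chi D S x else 0))"
      by (rule sum.cong) (auto simp: chi_flip[OF True _ fS])
    also have "\<dots> = real D * chi D S x - 2 * chi D S x * real (card S)"
    proof -
      have "(\<Sum>i<D. (if i \<in> S then 2 * chi D S x else 0)) = (\<Sum>i\<in>S. 2 * chi D S x)"
        using S by (simp add: sum.If_cases Int_absorb1)
      then show ?thesis by (simp add: sum_subtractf)
    qed
    finally show ?thesis by (simp add: algebra_simps)
  qed
qed

lemma inprod_adj_sym: "inprod D (mulvec D (adjmat D) v) w = inprod D v (mulvec D (adjmat D) w)"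
proof -
  have "inprod D (mulvec D (adjmat D) v) w = (\<Sum>x\<in>hcube D. \<Sum>y\<in>hcube D. adjmat D x y * v y * w x)"
    by (simp add: inprod_def mulvec_def sum_distrib_right)
  also have "\<dots> = (\<Sum>y\<in>hcube D. \<Sum>x\<in>hcube D. adjmat D y x * w x * v y)"
    by (subst sum.swap) (simp add: adjmat_sym mult.commute mult.left_commute)
  also have "\<dots> = inprod D v (mulvec D (adjmat D) w)"
    by (simp add: inprod_def mulvec_def sum_distrib_right sum_distrib_left mult.commute mult.left_commute)
  finally show ?thesis .
qed

lemma inprod_scale: "inprod D (\<lambda>x. c * v x) w = c * inprod D v w"
  by (simp add: inprod_def sum_distrib_left mult.assoc)

lemma inprod_comm: "inprod D v w = inprod D w v"
  by (simp add: inprod_def mult.commute)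

lemma E1_orth:
  assumes v: "v \<in> E1 D" and S: "S \<subseteq> {..<D}" and c: "card S \<noteq> 1"
  shows "inprod D v (chi D S) = 0"
proof -
  have "(real D - 2) * inprod D v (chi D S) = inprod D (mulvec D (adjmat D) v) (chi D S)"
    using v by (simp add: E1_def inprod_scale)
  also have "\<dots> = inprod D v (mulvec D (adjmat D) (chi D S))" by (rule inprod_adj_sym)
  also have "\<dots> = (real D - 2 * real (card S)) * inprod D v (chi D S)"
    by (simp add: adj_chi[OF S] inprod_comm[of D v] inprod_scale)
  finally have "(2 * real (card S) - 2) * inprod D v (chi D S) = 0" by (simp add: algebra_simps)
  moreover have "2 * real (card S) - 2 \<noteq> 0" using c by simp
  ultimately show ?thesis by simp
qed

lemma expansion:
  assumes v: "v \<in> E1 D"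
  shows "v = (\<lambda>x. \<Sum>m<D. inprod D v (chi D {m}) / 2 ^ D * chi D {m} x)"
proof
  fix x
  show "v x = (\<Sum>m<D. inprod D v (chi D {m}) / 2 ^ D * chi D {m} x)"
  proof (cases "x \<in> hcube D")
    case False
    then show ?thesis using v by (simp add: E1_def is_vec_def chi_out)
  next
    case True
    have "(\<Sum>S\<in>Pow {..<D}. inprod D v (chi D S) * chi D S x)
        = (\<Sum>S\<in>(\<lambda>m. {m}) ` {..<D}. inprod D v (chi D S) * chi D S x)"
    proof (rule sum.mono_neutral_right)
      show "\<forall>S\<in>Pow {..<D} - (\<lambda>m. {m}) ` {..<D}. inprod D v (chi D S) * chi D S x = 0"
      proof
        fix S assume S: "S \<in> Pow {..<D} - (\<lambda>m. {m}) ` {..<D}"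
        have "card S \<noteq> 1"
        proof
          assume "card S = 1"
          then obtain m where "S = {m}" by (meson card_1_singletonE)
          then show False using S by auto
        qed
        then show "inprod D v (chi D S) * chi D S x = 0" using E1_orth[OF v _ ] S by auto
      qed
    qed auto
    also have "\<dots> = (\<Sum>m<D. inprod D v (chi D {m}) * chi D {m} x)"
      by (rule sum.reindex_cong[where l="\<lambda>m. {m}"]) (auto simp: inj_on_def)
    finally show ?thesis using inversion[OF True, of v] by (simp add: sum_divide_distrib)
  qed
qed


lemma mulvec_mulvec: "mulvec D C (mulvec D E v) = mulvec D (matmul D C E) v"
proof
  fix x
  show "mulvec D C (mulvec D E v) x = mulvec D (matmul D C E) v x"
  proof (cases "x \<in> hcube D")
    case False then show ?thesis by (simp add: mulvec_def)
  next
    case True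
    have "mulvec D C (mulvec D E v) x = (\<Sum>y\<in>hcube D. \<Sum>z\<in>hcube D. C x y * E y z * v z)"
      using True by (simp add: mulvec_def sum_distrib_left mult.assoc)
    also have "\<dots> = (\<Sum>z\<in>hcube D. \<Sum>y\<in>hcube D. C x y * E y z * v z)" by (rule sum.swap)
    also have "\<dots> = mulvec D (matmul D C E) v x"
      using True by (auto simp: mulvec_def matmul_def sum_distrib_right intro!: sum.cong)
    finally show ?thesis .
  qed
qed

lemma mulvec_scale: "mulvec D B (\<lambda>x. c * v x) = (\<lambda>x. c * mulvec D B v x)"
  by (auto simp: mulvec_def sum_distrib_left mult.left_commute)

lemma mulvec_add: "mulvec D B (\<lambda>x. u x + w x) = (\<lambda>x. mulvec D B u x + mulvec D B w x)"
  by (auto simp: mulvec_def distrib_left sum.distrib)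

lemma mulvec_sum: "mulvec D B (\<lambda>x. \<Sum>j\<in>J. a j * g j x) = (\<lambda>x. \<Sum>j\<in>J. a j * mulvec D B (g j) x)"
proof
  fix x
  show "mulvec D B (\<lambda>x. \<Sum>j\<in>J. a j * g j x) x = (\<Sum>j\<in>J. a j * mulvec D B (g j) x)"
  proof (cases "x \<in> hcube D")
    case False then show ?thesis by (simp add: mulvec_def)
  next
    case True
    have "mulvec D B (\<lambda>x. \<Sum>j\<in>J. a j * g j x) x = (\<Sum>y\<in>hcube D. \<Sum>j\<in>J. B x y * (a j * g j y))"
      using True by (simp add: mulvec_def sum_distrib_left)
    also have "\<dots> = (\<Sum>j\<in>J. \<Sum>y\<in>hcube D. B x y * (a j * g j y))" by (rule sum.swap)
    also have "\<dots> = (\<Sum>j\<in>J. a j * mulvec D B (g j) x)"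
      using True by (simp add: mulvec_def sum_distrib_left mult.left_commute)
    finally show ?thesis .
  qed
qed

lemma E1_add: "u \<in> E1 D \<Longrightarrow> w \<in> E1 D \<Longrightarrow> (\<lambda>x. u x + w x) \<in> E1 D"
  by (auto simp: E1_def is_vec_def mulvec_add algebra_simps)

lemma E1_scale: "u \<in> E1 D \<Longrightarrow> (\<lambda>x. c * u x) \<in> E1 D"
  by (auto simp: E1_def is_vec_def mulvec_scale algebra_simps)

lemma E1_zero: "(\<lambda>x. 0) \<in> E1 D"
  by (auto simp: E1_def is_vec_def mulvec_def)

lemma E1_sum: "finite J \<Longrightarrow> (\<And>j. j \<in> J \<Longrightarrow> g j \<in> E1 D) \<Longrightarrow> (\<lambda>x. \<Sum>j\<in>J. a j * g j x) \<in> E1 D"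
proof (induction J rule: finite_induct)
  case empty then show ?case by (simp add: E1_zero)
next
  case (insert j J)
  have "(\<lambda>x. \<Sum>j\<in>insert j J. a j * g j x) = (\<lambda>x. (\<lambda>x. a j * g j x) x + (\<lambda>x. \<Sum>j\<in>J. a j * g j x) x)"
    using insert by simp
  then show ?case using insert E1_add E1_scale by simp
qed

lemma chi_E1: "m < D \<Longrightarrow> chi D {m} \<in> E1 D"
  using adj_chi[of "{m}" D] by (auto simp: E1_def is_vec_def chi_out)

lemma chi_sq: "x \<in> hcube D \<Longrightarrow> chi D {m} x * chi D {m} x = 1"
  by (simp add: chi_single hcube_def)

lemma chi1_flip: "x \<in> hcube D \<Longrightarrow> i < D \<Longrightarrow> chi D {m} (flip i x) = (if i = m then - chi D {m} x else chi D {m} x)"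
  using chi_flip[of x D i "{m}"] by auto

lemma adj_flip: "x \<in> hcube D \<Longrightarrow> i < D \<Longrightarrow> adjmat D x (flip i x) = 1"
  by (auto simp: adjmat_def hadj_iff)

lemma adj_flip': "x \<in> hcube D \<Longrightarrow> i < D \<Longrightarrow> adjmat D (flip i x) x = 1"
  by (simp add: adjmat_sym[of D "flip i x" x] adj_flip)

lemma adj_zero: "\<not> hadj D x y \<Longrightarrow> adjmat D x y = 0"
  by (simp add: adjmat_def)

context
  fixes D :: nat and B :: mat
  assumes B: "B \<in> antisym_A_like D"
begin

lemma B_mat: "is_mat D B" and B_like: "A_like D B" and B_anti: "antisym_mat D B"
  using B by (auto simp: antisym_A_like_def)

lemma B_zero: assumes x: "x \<in> hcube D" and y: "y \<in> hcube D" and n: "\<not> hadj D x y" shows "B x y = 0"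
proof (cases "x = y")
  case True
  have "B x x = - B x x" using B_anti x unfolding antisym_mat_def by blast
  then show ?thesis using True by simp
next
  case False
  then show ?thesis using B_like x y n unfolding A_like_def by blast
qed

lemma B_mulvec: "x \<in> hcube D \<Longrightarrow> mulvec D B v x = (\<Sum>i<D. B x (flip i x) * v (flip i x))"
  unfolding mulvec_def by (subst sum_support[where x=x]) (auto simp: B_zero)

lemma B_flip_anti: "x \<in> hcube D \<Longrightarrow> B (flip i x) x = - B x (flip i x)"
  using B_anti unfolding antisym_mat_def by (meson flip_in)

lemma B_diag: assumes x: "x \<in> hcube D" shows "(\<Sum>i<D. B x (flip i x)) = 0"
proof -
  have "matmul D B (adjmat D) x x = (\<Sum>z\<in>hcube D. B x z * adjmat D z x)"
    using x by (simp add: matmul_def)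
  also have "\<dots> = (\<Sum>i<D. B x (flip i x) * adjmat D (flip i x) x)"
    by (rule sum_support[OF x]) (simp add: B_zero[OF x])
  also have "\<dots> = (\<Sum>i<D. B x (flip i x))"
    by (rule sum.cong) (simp_all add: adj_flip'[OF x])
  finally have 1: "matmul D B (adjmat D) x x = (\<Sum>i<D. B x (flip i x))" .
  have "matmul D (adjmat D) B x x = (\<Sum>z\<in>hcube D. adjmat D x z * B z x)"
    using x by (simp add: matmul_def)
  also have "\<dots> = (\<Sum>i<D. adjmat D x (flip i x) * B (flip i x) x)"
    by (rule sum_support[OF x]) (simp add: adj_zero)
  also have "\<dots> = (\<Sum>i<D. - B x (flip i x))"
    by (rule sum.cong) (simp_all add: adj_flip[OF x] B_flip_anti[OF x])
  finally have 2: "matmul D (adjmat D) B x x = - (\<Sum>i<D. B x (flip i x))" by (simp add: sum_negf)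
  have "matmul D B (adjmat D) = matmul D (adjmat D) B" using B_like unfolding A_like_def by blast
  then show ?thesis using 1 2 by simp
qed

lemma B_chi: assumes x: "x \<in> hcube D" and m: "m < D"
  shows "mulvec D B (chi D {m}) x = - 2 * chi D {m} x * B x (flip m x)"
proof -
  have "mulvec D B (chi D {m}) x = (\<Sum>i<D. chi D {m} x * B x (flip i x) - (if i = m then 2 * chi D {m} x * B x (flip i x) else 0))"
    using x by (auto simp: B_mulvec chi1_flip intro!: sum.cong)
  also have "\<dots> = chi D {m} x * (\<Sum>i<D. B x (flip i x)) - 2 * chi D {m} x * B x (flip m x)"
    using m by (simp add: sum_subtractf sum_distrib_left)
  finally show ?thesis using B_diag[OF x] by simp
qed

lemma B_E1: "v \<in> E1 D \<Longrightarrow> mulvec D B v \<in> E1 D"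
proof -
  assume v: "v \<in> E1 D"
  have "mulvec D (adjmat D) (mulvec D B v) = mulvec D B (mulvec D (adjmat D) v)"
    using B_like unfolding A_like_def by (simp add: mulvec_mulvec)
  also have "\<dots> = (\<lambda>x. (real D - 2) * mulvec D B v x)"
    using v by (simp add: E1_def mulvec_scale)
  moreover have "is_vec D (mulvec D B v)" by (simp add: is_vec_def mulvec_def)
  ultimately show ?thesis by (simp add: E1_def)
qed

lemma B_skew: "inprod D (mulvec D B u) w = - inprod D u (mulvec D B w)"
proof -
  have "inprod D (mulvec D B u) w = (\<Sum>x\<in>hcube D. \<Sum>y\<in>hcube D. B x y * u y * w x)"
    by (simp add: inprod_def mulvec_def sum_distrib_right)
  also have "\<dots> = (\<Sum>y\<in>hcube D. \<Sum>x\<in>hcube D. B x y * u y * w x)" by (rule sum.swap)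
  also have "\<dots> = (\<Sum>y\<in>hcube D. \<Sum>x\<in>hcube D. - (u y * (B y x * w x)))"
  proof (rule sum.cong[OF refl], rule sum.cong[OF refl])
    fix y x assume "y \<in> hcube D" "x \<in> hcube D"
    then have "B x y = - B y x" using B_anti unfolding antisym_mat_def by blast
    then show "B x y * u y * w x = - (u y * (B y x * w x))" by simp
  qed
  also have "\<dots> = - inprod D u (mulvec D B w)"
    by (simp add: inprod_def mulvec_def sum_distrib_left sum_negf)
  finally show ?thesis .
qed

end


lemma pair_sum:
  fixes g :: "nat \<Rightarrow> nat \<Rightarrow> real"
  assumes I: "finite I" and h: "\<And>i k. i \<in> I \<Longrightarrow> k \<in> I \<Longrightarrow> g i k + g k i = (if i = k then d k else 0)"
  shows "2 * (\<Sum>i\<in>I. \<Sum>k\<in>I. g i k) = (\<Sum>k\<in>I. d k)"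
proof -
  have "2 * (\<Sum>i\<in>I. \<Sum>k\<in>I. g i k) = (\<Sum>i\<in>I. \<Sum>k\<in>I. g i k) + (\<Sum>k\<in>I. \<Sum>i\<in>I. g i k)"
    by (simp add: sum.swap[of g I I])
  also have "\<dots> = (\<Sum>i\<in>I. \<Sum>k\<in>I. g i k + g k i)"
    by (simp add: sum.distrib)
  also have "\<dots> = (\<Sum>i\<in>I. \<Sum>k\<in>I. if i = k then d k else 0)"
    by (rule sum.cong[OF refl], rule sum.cong[OF refl]) (simp add: h)
  also have "\<dots> = (\<Sum>k\<in>I. d k)" using I by simp
  finally show ?thesis .
qed

definition tc :: "nat \<Rightarrow> (vec \<Rightarrow> vec) \<Rightarrow> nat \<Rightarrow> nat \<Rightarrow> real" where
  "tc D T j k = inprod D (T (chi D {k})) (chi D {j}) / 2 ^ D"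

definition cc :: "nat \<Rightarrow> (vec \<Rightarrow> vec) \<Rightarrow> nat \<Rightarrow> nat \<Rightarrow> real" where
  "cc D T j k = - tc D T j k / 2"

definition ff :: "nat \<Rightarrow> (vec \<Rightarrow> vec) \<Rightarrow> nat \<Rightarrow> vtx \<Rightarrow> real" where
  "ff D T k x = (\<Sum>j<D. cc D T j k * chi D {j} x * chi D {k} x)"

definition BB :: "nat \<Rightarrow> (vec \<Rightarrow> vec) \<Rightarrow> mat" where
  "BB D T x y = (if x \<in> hcube D \<and> y \<in> hcube D then (\<Sum>k<D. if y = flip k x then ff D T k x else 0) else 0)"

context
  fixes D :: nat and T :: "vec \<Rightarrow> vec"
  assumes T: "T \<in> skew_maps_E1 D"
begin

lemma T_E1: "v \<in> E1 D \<Longrightarrow> T v \<in> E1 D"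
  using T by (auto simp: skew_maps_E1_def)

lemma T_add: "u \<in> E1 D \<Longrightarrow> w \<in> E1 D \<Longrightarrow> T (\<lambda>x. u x + w x) = (\<lambda>x. T u x + T w x)"
  using T by (auto simp: skew_maps_E1_def)

lemma T_scale: "u \<in> E1 D \<Longrightarrow> T (\<lambda>x. c * u x) = (\<lambda>x. c * T u x)"
  using T unfolding skew_maps_E1_def by blast

lemma T_skew: "u \<in> E1 D \<Longrightarrow> w \<in> E1 D \<Longrightarrow> inprod D (T u) w = - inprod D u (T w)"
  using T unfolding skew_maps_E1_def by blast

lemma T_zero: "T (\<lambda>x. 0) = (\<lambda>x. 0)"
  using T_scale[OF E1_zero, of 0] by simp

lemma T_sum: "finite J \<Longrightarrow> (\<And>j. j \<in> J \<Longrightarrow> g j \<in> E1 D) \<Longrightarrow>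
    T (\<lambda>x. \<Sum>j\<in>J. a j * g j x) = (\<lambda>x. \<Sum>j\<in>J. a j * T (g j) x)"
proof (induction J rule: finite_induct)
  case empty then show ?case by (simp add: T_zero)
next
  case (insert j J)
  have gj: "g j \<in> E1 D" using insert by simp
  have r: "(\<lambda>x. \<Sum>j\<in>J. a j * g j x) \<in> E1 D" by (rule E1_sum) (use insert in auto)
  have "(\<lambda>x. \<Sum>j\<in>insert j J. a j * g j x) = (\<lambda>x. (\<lambda>x. a j * g j x) x + (\<lambda>x. \<Sum>j\<in>J. a j * g j x) x)"
    using insert by simp
  then have "T (\<lambda>x. \<Sum>j\<in>insert j J. a j * g j x) = (\<lambda>x. T (\<lambda>x. a j * g j x) x + T (\<lambda>x. \<Sum>j\<in>J. a j * g j x) x)"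
    using T_add[OF E1_scale[OF gj] r] by simp
  also have "\<dots> = (\<lambda>x. a j * T (g j) x + (\<Sum>j\<in>J. a j * T (g j) x))"
    using insert T_scale[OF gj] by simp
  finally show ?case using insert by simp
qed

lemma tc_anti: assumes "j < D" "k < D" shows "tc D T j k = - tc D T k j"
proof -
  have "inprod D (T (chi D {k})) (chi D {j}) = - inprod D (chi D {k}) (T (chi D {j}))"
    by (rule T_skew[OF chi_E1 chi_E1]) (use assms in auto)
  moreover have "inprod D (chi D {k}) (T (chi D {j})) = inprod D (T (chi D {j})) (chi D {k})"
    by (rule inprod_comm)
  ultimately show ?thesis unfolding tc_def by simp
qed

lemma cc_anti: assumes "j < D" "k < D" shows "cc D T j k = - cc D T k j"
  unfolding cc_def using tc_anti[OF assms] by simp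

lemma cc_diag: assumes "k < D" shows "cc D T k k = 0"
proof -
  have "cc D T k k = - cc D T k k" by (rule cc_anti) (use assms in auto)
  then show ?thesis by linarith
qed

lemma T_chi: "m < D \<Longrightarrow> T (chi D {m}) = (\<lambda>x. \<Sum>j<D. tc D T j m * chi D {j} x)"
  using expansion[OF T_E1[OF chi_E1]] by (simp add: tc_def)

lemma F1: "(\<Sum>k<D. ff D T k x) = 0"
proof -
  let ?t = "\<lambda>j k. cc D T j k * chi D {j} x * chi D {k} x"
  have "(\<Sum>k<D. ff D T k x) = (\<Sum>k<D. \<Sum>j<D. ?t j k)" by (simp add: ff_def)
  also have "\<dots> = (\<Sum>j<D. \<Sum>k<D. ?t j k)" by (rule sum.swap)
  also have "\<dots> = (\<Sum>j<D. \<Sum>k<D. - ?t k j)"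
  proof (rule sum.cong[OF refl], rule sum.cong[OF refl])
    fix j k assume "j \<in> {..<D}" "k \<in> {..<D}"
    then have "cc D T j k = - cc D T k j" by (intro cc_anti) auto
    then show "?t j k = - ?t k j" by simp
  qed
  also have "\<dots> = - (\<Sum>k<D. \<Sum>j<D. ?t j k)" by (simp add: sum_negf)
  finally have "(\<Sum>k<D. ff D T k x) = - (\<Sum>k<D. ff D T k x)" by (simp add: ff_def)
  then show ?thesis by simp
qed

lemma F2: assumes x: "x \<in> hcube D" and k: "k < D" shows "ff D T k (flip k x) = - ff D T k x"
proof -
  have "ff D T k (flip k x) = (\<Sum>j<D. - (cc D T j k * chi D {j} x * chi D {k} x))"
    unfolding ff_def
    by (rule sum.cong[OF refl]) (auto simp: chi1_flip[OF x] k cc_diag)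
  then show ?thesis by (simp add: sum_negf ff_def)
qed

lemma F3: assumes x: "x \<in> hcube D" and i: "i < D" and k: "k < D" and ik: "i \<noteq> k"
  shows "ff D T i (flip k x) = ff D T i x - 2 * cc D T k i * chi D {k} x * chi D {i} x"
proof -
  have "ff D T i (flip k x) = (\<Sum>j<D. cc D T j i * chi D {j} x * chi D {i} x
      - (if j = k then 2 * cc D T j i * chi D {j} x * chi D {i} x else 0))"
    unfolding ff_def
    by (rule sum.cong[OF refl]) (use ik in \<open>auto simp: chi1_flip[OF x] k\<close>)
  then show ?thesis using k by (simp add: sum_subtractf ff_def)
qed

lemma BB_flip: assumes x: "x \<in> hcube D" and k: "k < D" shows "BB D T x (flip k x) = ff D T k x"
proof -
  have lx: "length x = D" using x by (simp add: hcube_def)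
  have "BB D T x (flip k x) = (\<Sum>i<D. if i = k then ff D T i x else 0)"
    unfolding BB_def using x
    by (auto intro!: sum.cong simp: flip_inj lx k)
  then show ?thesis using k by simp
qed

lemma BB_nonadj: assumes x: "x \<in> hcube D" and n: "\<not> hadj D x y" shows "BB D T x y = 0"
proof -
  have "\<forall>k<D. y \<noteq> flip k x" using n hadj_iff[OF x] by blast
  then show ?thesis by (simp add: BB_def)
qed

lemma BB_in: "BB D T \<in> antisym_A_like D"
proof -
  have mat: "is_mat D (BB D T)" by (auto simp: is_mat_def BB_def)
  have anti: "antisym_mat D (BB D T)"
    unfolding antisym_mat_def
  proof (intro ballI)
    fix x y assume x: "x \<in> hcube D" and y: "y \<in> hcube D"
    show "BB D T y x = - BB D T x y"
    proof (cases "hadj D x y")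
      case True
      then obtain k where k: "k < D" "y = flip k x" using hadj_iff[OF x] by blast
      then have "x = flip k y" by simp
      then have "BB D T y x = ff D T k y" using BB_flip[OF y k(1)] by simp
      also have "\<dots> = - ff D T k x" using F2[OF x k(1)] k(2) by simp
      also have "\<dots> = - BB D T x y" using BB_flip[OF x k(1)] k(2) by simp
      finally show ?thesis .
    next
      case False
      then have "\<not> hadj D y x" using hadj_sym by metis
      then show ?thesis using False BB_nonadj x y by simp
    qed
  qed
  have supp: "\<forall>x\<in>hcube D. \<forall>y\<in>hcube D. x \<noteq> y \<and> \<not> hadj D x y \<longrightarrow> BB D T x y = 0"
    using BB_nonadj by blast
  have comm: "matmul D (BB D T) (adjmat D) = matmul D (adjmat D) (BB D T)"
  proof (intro ext)
    fix x y
    show "matmul D (BB D T) (adjmat D) x y = matmul D (adjmat D) (BB D T) x y"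
    proof (cases "x \<in> hcube D \<and> y \<in> hcube D")
      case False then show ?thesis by (auto simp: matmul_def)
    next
      case True
      then have x: "x \<in> hcube D" and y: "y \<in> hcube D" by auto
      have "matmul D (BB D T) (adjmat D) x y = (\<Sum>z\<in>hcube D. BB D T x z * adjmat D y z)"
        using x y unfolding matmul_def by (simp add: adjmat_sym[of D _ y])
      also have "\<dots> = (\<Sum>i<D. BB D T x (flip i y) * adjmat D y (flip i y))"
        by (rule sum_support[OF y]) (simp add: adj_zero)
      also have "\<dots> = (\<Sum>i<D. BB D T x (flip i y))"
        by (rule sum.cong[OF refl]) (simp add: adj_flip[OF y])
      also have "\<dots> = (\<Sum>i<D. \<Sum>k<D. if y = flip i (flip k x) then ff D T k x else 0)"
      proof (rule sum.cong[OF refl])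
        fix i assume "i \<in> {..<D}"
        have "BB D T x (flip i y) = (\<Sum>k<D. if flip i y = flip k x then ff D T k x else 0)"
          using x y by (simp add: BB_def)
        also have "\<dots> = (\<Sum>k<D. if y = flip i (flip k x) then ff D T k x else 0)"
          by (rule sum.cong[OF refl]) (metis flip_flip)
        finally show "BB D T x (flip i y) = (\<Sum>k<D. if y = flip i (flip k x) then ff D T k x else 0)" .
      qed
      finally have L: "matmul D (BB D T) (adjmat D) x y = (\<Sum>i<D. \<Sum>k<D. if y = flip i (flip k x) then ff D T k x else 0)" .
      have "matmul D (adjmat D) (BB D T) x y = (\<Sum>z\<in>hcube D. adjmat D x z * BB D T z y)"
        using x y by (simp add: matmul_def)
      also have "\<dots> = (\<Sum>i<D. adjmat D x (flip i x) * BB D T (flip i x) y)"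
        by (rule sum_support[OF x]) (simp add: adj_zero)
      also have "\<dots> = (\<Sum>i<D. BB D T (flip i x) y)"
        by (rule sum.cong[OF refl]) (simp add: adj_flip[OF x])
      also have "\<dots> = (\<Sum>i<D. \<Sum>k<D. if y = flip k (flip i x) then ff D T k (flip i x) else 0)"
        unfolding BB_def using x y by simp
      also have "\<dots> = (\<Sum>k<D. \<Sum>i<D. if y = flip k (flip i x) then ff D T k (flip i x) else 0)"
        by (rule sum.swap)
      finally have R: "matmul D (adjmat D) (BB D T) x y = (\<Sum>i<D. \<Sum>k<D. if y = flip i (flip k x) then ff D T i (flip k x) else 0)" .
      let ?g = "\<lambda>i k. (if y = flip i (flip k x) then ff D T k x - ff D T i (flip k x) else 0)"
      have "2 * (\<Sum>i\<in>{..<D}. \<Sum>k\<in>{..<D}. ?g i k) = (\<Sum>k\<in>{..<D}. if y = x then 4 * ff D T k x else 0)"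
      proof (rule pair_sum)
        fix i k assume i: "i \<in> {..<D}" and k: "k \<in> {..<D}"
        show "?g i k + ?g k i = (if i = k then (if y = x then 4 * ff D T k x else 0) else 0)"
        proof (cases "i = k")
          case True
          then show ?thesis using F2[OF x] k by auto
        next
          case False
          have e: "flip k (flip i x) = flip i (flip k x)" by (rule flip_comm)
          have "ff D T k x - ff D T i (flip k x) + (ff D T i x - ff D T k (flip i x)) = 0"
            using F3[OF x, of i k] F3[OF x, of k i] i k False cc_anti[of i k] by (simp add: algebra_simps)
          then show ?thesis using False e by auto
        qed
      qed simp
      also have "\<dots> = (if y = x then 4 * (\<Sum>k<D. ff D T k x) else 0)"
        by (simp add: sum_distrib_left)
      also have "\<dots> = 0" by (simp add: F1)
      finally have "(\<Sum>i<D. \<Sum>k<D. ?g i k) = 0" by simp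
      moreover have "(\<Sum>i<D. \<Sum>k<D. ?g i k) = (\<Sum>i<D. \<Sum>k<D. if y = flip i (flip k x) then ff D T k x else 0)
               - (\<Sum>i<D. \<Sum>k<D. if y = flip i (flip k x) then ff D T i (flip k x) else 0)"
        unfolding sum_subtractf[symmetric] by (rule sum.cong[OF refl], rule sum.cong[OF refl]) simp
      ultimately have "(\<Sum>i<D. \<Sum>k<D. if y = flip i (flip k x) then ff D T k x else 0)
               - (\<Sum>i<D. \<Sum>k<D. if y = flip i (flip k x) then ff D T i (flip k x) else 0) = 0"
        by simp
      then show ?thesis using L R by simp
    qed
  qed
  show ?thesis using mat anti supp comm by (simp add: antisym_A_like_def A_like_def)
qed

lemma BB_chi: assumes m: "m < D" shows "mulvec D (BB D T) (chi D {m}) = T (chi D {m})"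
proof
  fix x
  show "mulvec D (BB D T) (chi D {m}) x = T (chi D {m}) x"
  proof (cases "x \<in> hcube D")
    case False
    then show ?thesis using T_E1[OF chi_E1[OF m]] by (simp add: mulvec_def E1_def is_vec_def)
  next
    case True
    have "mulvec D (BB D T) (chi D {m}) x = - 2 * chi D {m} x * ff D T m x"
      using B_chi[OF BB_in True m] BB_flip[OF True m] by simp
    also have "\<dots> = (\<Sum>j<D. (-2 * cc D T j m) * chi D {j} x * (chi D {m} x * chi D {m} x))"
      by (simp add: ff_def sum_distrib_left mult_ac)
    also have "\<dots> = (\<Sum>j<D. tc D T j m * chi D {j} x)"
      by (simp add: chi_sq[OF True] cc_def)
    also have "\<dots> = T (chi D {m}) x" by (simp add: T_chi[OF m])
    finally show ?thesis .
  qed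
qed

lemma BB_restrict: "restrict (mulvec D (BB D T)) (E1 D) = T"
proof
  fix v
  show "restrict (mulvec D (BB D T)) (E1 D) v = T v"
  proof (cases "v \<in> E1 D")
    case False
    then show ?thesis using T by (simp add: skew_maps_E1_def extensional_def)
  next
    case True
    let ?a = "\<lambda>m. inprod D v (chi D {m}) / 2 ^ D"
    have v: "v = (\<lambda>x. \<Sum>m<D. ?a m * chi D {m} x)" by (rule expansion[OF True])
    have "mulvec D (BB D T) v = (\<lambda>x. \<Sum>m<D. ?a m * mulvec D (BB D T) (chi D {m}) x)"
      by (subst v, rule mulvec_sum)
    also have "\<dots> = (\<lambda>x. \<Sum>m<D. ?a m * T (chi D {m}) x)" by (simp add: BB_chi)
    also have "\<dots> = T (\<lambda>x. \<Sum>m<D. ?a m * chi D {m} x)"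
      by (rule T_sum[symmetric]) (auto simp: chi_E1)
    also have "\<dots> = T v" using v by simp
    finally show ?thesis using True by simp
  qed
qed

end


theorem proposition9p9:
  fixes D :: nat
  assumes "D \<ge> 1"
  shows "(\<forall>B\<in>antisym_A_like D. \<forall>v\<in>E1 D. mulvec D B v \<in> E1 D) \<and>
         bij_betw (\<lambda>B. restrict (mulvec D B) (E1 D)) (antisym_A_like D) (skew_maps_E1 D)"
proof (intro conjI)
  show "\<forall>B\<in>antisym_A_like D. \<forall>v\<in>E1 D. mulvec D B v \<in> E1 D" using B_E1 by blast
  show "bij_betw (\<lambda>B. restrict (mulvec D B) (E1 D)) (antisym_A_like D) (skew_maps_E1 D)"
    unfolding bij_betw_def
  proof (intro conjI)
    show "inj_on (\<lambda>B. restrict (mulvec D B) (E1 D)) (antisym_A_like D)"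
    proof (rule inj_onI)
      fix B1 B2 assume B1: "B1 \<in> antisym_A_like D" and B2: "B2 \<in> antisym_A_like D"
        and eq: "restrict (mulvec D B1) (E1 D) = restrict (mulvec D B2) (E1 D)"
      have fl: "B1 x (flip m x) = B2 x (flip m x)" if x: "x \<in> hcube D" and m: "m < D" for x m
      proof -
        have "mulvec D B1 (chi D {m}) = mulvec D B2 (chi D {m})"
          using fun_cong[OF eq, of "chi D {m}"] chi_E1[OF m] by simp
        then have e: "mulvec D B1 (chi D {m}) x = mulvec D B2 (chi D {m}) x" by simp
        have "- 2 * chi D {m} x * B1 x (flip m x) = - 2 * chi D {m} x * B2 x (flip m x)"
          using e unfolding B_chi[OF B1 x m] B_chi[OF B2 x m] .
        moreover have "chi D {m} x \<noteq> 0" using chi_sq[OF x, of m] by auto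
        ultimately show ?thesis by simp
      qed
      show "B1 = B2"
      proof (intro ext)
        fix x y
        show "B1 x y = B2 x y"
        proof (cases "x \<in> hcube D \<and> y \<in> hcube D")
          case False
          have "B1 x y = 0" using False B_mat[OF B1] unfolding is_mat_def by blast
          moreover have "B2 x y = 0" using False B_mat[OF B2] unfolding is_mat_def by blast
          ultimately show ?thesis by simp
        next
          case True
          then have x: "x \<in> hcube D" and y: "y \<in> hcube D" by auto
          show ?thesis
          proof (cases "hadj D x y")
            case True
            then obtain m where "m < D" "y = flip m x" using hadj_iff[OF x] by blast
            then show ?thesis using fl[OF x] by simp
          next
            case False
            then show ?thesis using B_zero[OF B1 x y] B_zero[OF B2 x y] by simp
          qed
        qed
      qed
    qed
    show "(\<lambda>B. restrict (mulvec D B) (E1 D)) ` antisym_A_like D = skew_maps_E1 D"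
    proof (intro equalityI subsetI)
      fix T assume "T \<in> (\<lambda>B. restrict (mulvec D B) (E1 D)) ` antisym_A_like D"
      then obtain B where B: "B \<in> antisym_A_like D" and T: "T = restrict (mulvec D B) (E1 D)" by blast
      show "T \<in> skew_maps_E1 D"
        unfolding skew_maps_E1_def T
      proof (intro CollectI conjI ballI allI)
        show "restrict (mulvec D B) (E1 D) \<in> extensional (E1 D)" by simp
        show "restrict (mulvec D B) (E1 D) \<in> E1 D \<rightarrow> E1 D" using B_E1[OF B] by auto
        fix u w assume u: "u \<in> E1 D" and w: "w \<in> E1 D"
        show "restrict (mulvec D B) (E1 D) (\<lambda>x. u x + w x) =
              (\<lambda>x. restrict (mulvec D B) (E1 D) u x + restrict (mulvec D B) (E1 D) w x)"
          using u w E1_add[OF u w] by (simp add: mulvec_add)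
        show "inprod D (restrict (mulvec D B) (E1 D) u) w = - inprod D u (restrict (mulvec D B) (E1 D) w)"
          using u w B_skew[OF B] by simp
      next
        fix c u assume u: "u \<in> E1 D"
        show "restrict (mulvec D B) (E1 D) (\<lambda>x. c * u x) = (\<lambda>x. c * restrict (mulvec D B) (E1 D) u x)"
          using u E1_scale[OF u] by (simp add: mulvec_scale)
      qed
    next
      fix T assume T: "T \<in> skew_maps_E1 D"
      show "T \<in> (\<lambda>B. restrict (mulvec D B) (E1 D)) ` antisym_A_like D"
        by (rule image_eqI[where x="BB D T"]) (simp_all add: BB_restrict[OF T] BB_in[OF T])
    qed
  qed
qed

end
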